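(* Let $[\mathcal{S},\mathcal{T},\mathcal{R}]$ be a backdoor triple with $\mathcal{S},\mathcal{T},\mathcal{R}$ finite, and let $a$ be the maximum arity of the relations in $\mathcal{S}$. Then there is a branching map for the sidedoor triple $\llbracket\mathcal{S}\cup\mathcal{R},\mathcal{T}\cup\mathcal{R},r\rrbracket$ whenever $r\ge\max(2,a)$.
   Context: A partition scheme is a set $\mathcal{R}$ of binary relations over a domain $D$ that are pairwise disjoint, whose union is $D^2$, which contains equality on $D$, and which is closed under converses. A backdoor triple $[\mathcal{S},\mathcal{T},\mathcal{R}]$ consists of a partition scheme $\mathcal{R}$ and two sets $\mathcal{S},\mathcal{T}$ of relations over $D$ each definable in $\mathcal{R}$ by a quantifier-free first-order formula (with equality, without parameters). A sidedoor triple $\llbracket\mathcal{S}',\mathcal{T}',r\rrbracket$ consists of two sets of relations $\mathcal{S}',\mathcal{T}'$ over a common domain with $\mathcal{T}'\subseteq\mathcal{S}'$ and an integer $r\ge1$. For distinct variables $x_1,\dots,x_r$, let $\mathcal{S}'_r$ (resp. $\mathcal{T}'_r$) be the set of $\mathrm{CSP}(\mathcal{S}')$ (resp. $\mathrm{CSP}(\mathcal{T}')$) instances with variable set $\{x_1,\dots,x_r\}$. A branching map for $\llbracket\mathcal{S}',\mathcal{T}',r\rrbracket$ (from $\mathcal{S}'$ to $\mathcal{T}'$ with radius $r$) is a total map $\Omega\colon\mathcal{S}'_r\to2^{\mathcal{T}'_r}$ with $\mathrm{Sol}(I)=\bigcup_{I'\in\Omega(I)}\mathrm{Sol}(I')$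 for every $I\in\mathcal{S}'_r$, where $\mathrm{Sol}$ denotes the set of satisfying assignments. *)

theory Defs
  imports "HOL-Library.FuncSet"
begin

text \<open>Keeping the arity explicit makes the arity of the empty relation meaningful.\<close>
type_synonym 'a relation = "nat \<times> 'a list set"

definition arity :: "'a relation \<Rightarrow> nat" where "arity R = fst R"
definition tuples :: "'a relation \<Rightarrow> 'a list set" where "tuples R = snd R"

definition rel_over :: "'a set \<Rightarrow> 'a relation \<Rightarrow> bool" where
  "rel_over D R \<longleftrightarrow> (\<forall>t\<in>tuples R. length t = arity R \<and> set t \<subseteq> D)"

definition equality_rel :: "'a set \<Rightarrow> 'a relation" where
  "equality_rel D = (2, {[x, x] | x. x \<in> D})"

definition converse_rel :: "'a relation \<Rightarrow> 'a relation" where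
  "converse_rel R = (2, {[y, x] | x y. [x, y] \<in> tuples R})"

definition partition_scheme :: "'a set \<Rightarrow> 'a relation set \<Rightarrow> bool" where
  "partition_scheme D \<R> \<longleftrightarrow>
     (\<forall>R\<in>\<R>. rel_over D R \<and> arity R = 2) \<and>
     (\<forall>R1\<in>\<R>. \<forall>R2\<in>\<R>. R1 \<noteq> R2 \<longrightarrow> tuples R1 \<inter> tuples R2 = {}) \<and>
     (\<Union>R\<in>\<R>. tuples R) = {[x, y] | x y. x \<in> D \<and> y \<in> D} \<and>
     equality_rel D \<in> \<R> \<and>
     (\<forall>R\<in>\<R>. converse_rel R \<in> \<R>)"

text \<open>Quantifier-free first-order formulas with equality and without parameters,
  over binary relation symbols (the relations themselves), with variables x_0, x_1, ...\<close>
datatype 'r qf =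
    QTrue | QFalse
  | QEq nat nat
  | QAtom 'r nat nat
  | QNot "'r qf"
  | QAnd "'r qf" "'r qf"
  | QOr "'r qf" "'r qf"

fun qf_vars :: "'r qf \<Rightarrow> nat set" where
  "qf_vars QTrue = {}"
| "qf_vars QFalse = {}"
| "qf_vars (QEq i j) = {i, j}"
| "qf_vars (QAtom R i j) = {i, j}"
| "qf_vars (QNot \<phi>) = qf_vars \<phi>"
| "qf_vars (QAnd \<phi> \<psi>) = qf_vars \<phi> \<union> qf_vars \<psi>"
| "qf_vars (QOr \<phi> \<psi>) = qf_vars \<phi> \<union> qf_vars \<psi>"

fun qf_syms :: "'r qf \<Rightarrow> 'r set" where
  "qf_syms QTrue = {}"
| "qf_syms QFalse = {}"
| "qf_syms (QEq i j) = {}"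
| "qf_syms (QAtom R i j) = {R}"
| "qf_syms (QNot \<phi>) = qf_syms \<phi>"
| "qf_syms (QAnd \<phi> \<psi>) = qf_syms \<phi> \<union> qf_syms \<psi>"
| "qf_syms (QOr \<phi> \<psi>) = qf_syms \<phi> \<union> qf_syms \<psi>"

fun qf_sat :: "'a relation qf \<Rightarrow> 'a list \<Rightarrow> bool" where
  "qf_sat QTrue xs = True"
| "qf_sat QFalse xs = False"
| "qf_sat (QEq i j) xs = (xs ! i = xs ! j)"
| "qf_sat (QAtom R i j) xs = ([xs ! i, xs ! j] \<in> tuples R)"
| "qf_sat (QNot \<phi>) xs = (\<not> qf_sat \<phi> xs)"
| "qf_sat (QAnd \<phi> \<psi>) xs = (qf_sat \<phi> xs \<and> qf_sat \<psi> xs)"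
| "qf_sat (QOr \<phi> \<psi>) xs = (qf_sat \<phi> xs \<or> qf_sat \<psi> xs)"

definition qf_definable :: "'a set \<Rightarrow> 'a relation set \<Rightarrow> 'a relation \<Rightarrow> bool" where
  "qf_definable D \<R> S \<longleftrightarrow>
     (\<exists>\<phi>. qf_vars \<phi> \<subseteq> {..<arity S} \<and> qf_syms \<phi> \<subseteq> \<R> \<and>
          tuples S = {xs. length xs = arity S \<and> set xs \<subseteq> D \<and> qf_sat \<phi> xs})"

definition backdoor_triple ::
  "'a set \<Rightarrow> 'a relation set \<Rightarrow> 'a relation set \<Rightarrow> 'a relation set \<Rightarrow> bool" where
  "backdoor_triple D \<S> \<T> \<R> \<longleftrightarrow>
     partition_scheme D \<R> \<and> (\<forall>S\<in>\<S>. qf_definable D \<R> S) \<and> (\<forall>T\<in>\<T>. qf_definable D \<R> T)"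

text \<open>CSP instances over the variable set {x_0,...,x_(r-1)} (variables are naturals < r):
  finite sets of constraints (R, scope) with R in the constraint language.\<close>
type_synonym 'a csp_instance = "('a relation \<times> nat list) set"

definition instances_r :: "'a relation set \<Rightarrow> nat \<Rightarrow> 'a csp_instance set" where
  "instances_r \<Gamma> r = {I. finite I \<and>
      (\<forall>(R, vs)\<in>I. R \<in> \<Gamma> \<and> length vs = arity R \<and> set vs \<subseteq> {..<r})}"

definition Sol :: "'a set \<Rightarrow> nat \<Rightarrow> 'a csp_instance \<Rightarrow> (nat \<Rightarrow> 'a) set" where
  "Sol D r I = {f \<in> {..<r} \<rightarrow>\<^sub>E D. \<forall>(R, vs)\<in>I. map f vs \<in> tuples R}"

definition branching_map ::
  "'a set \<Rightarrow> 'a relation set \<Rightarrow> 'a relation set \<Rightarrow> nat \<Rightarrow> ('a csp_instance \<Rightarrow> 'a csp_instance set) \<Rightarrow> bool" where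
  "branching_map D \<S>' \<T>' r \<Omega> \<longleftrightarrow>
     (\<forall>I\<in>instances_r \<S>' r. \<Omega> I \<subseteq> instances_r \<T>' r \<and>
        Sol D r I = (\<Union>I'\<in>\<Omega> I. Sol D r I'))"

end

theory Submission
  imports Defs
begin

lemma eq_rel_mem: "x \<in> D \<Longrightarrow> ([x, y] \<in> tuples (equality_rel D)) = (x = y)"
  by (auto simp: equality_rel_def tuples_def)

lemma qf_pres:
  assumes "equality_rel D \<in> \<R>" and "set xs \<subseteq> D" and "set ys \<subseteq> D"
    and "length xs = length ys"
    and "\<And>i j R. i < length xs \<Longrightarrow> j < length xs \<Longrightarrow> R \<in> \<R> \<Longrightarrow>
          ([xs!i, xs!j] \<in> tuples R) = ([ys!i, ys!j] \<in> tuples R)"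
  shows "qf_vars \<phi> \<subseteq> {..<length xs} \<Longrightarrow> qf_syms \<phi> \<subseteq> \<R> \<Longrightarrow> qf_sat \<phi> xs = qf_sat \<phi> ys"
proof (induction \<phi>)
  case (QEq i j)
  have i: "i < length xs" "j < length xs" using QEq by auto
  have "xs!i \<in> D" "ys!i \<in> D" using i assms(2,3,4) nth_mem by (metis subsetD)+
  then show ?case using assms(5)[OF i assms(1)] eq_rel_mem[of "xs!i" D "xs!j"] eq_rel_mem[of "ys!i" D "ys!j"] by simp
next
  case (QAtom R i j)
  then show ?case using assms(5) by auto
qed auto

definition rtype :: "'a relation set \<Rightarrow> nat \<Rightarrow> (nat \<Rightarrow> 'a) \<Rightarrow> 'a csp_instance" where
  "rtype \<R> r f = {(R, [i, j]) | R i j. R \<in> \<R> \<and> i < r \<and> j < r \<and> [f i, f j] \<in> tuples R}"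

theorem mainTheorem12:
  fixes D :: "'a set" and \<S> \<T> \<R> :: "'a relation set" and r :: nat
  assumes "backdoor_triple D \<S> \<T> \<R>"
    and "finite \<S>" and "finite \<T>" and "finite \<R>"
    and "r \<ge> 2" and "\<forall>S\<in>\<S>. arity S \<le> r"
  shows "\<exists>\<Omega>. branching_map D (\<S> \<union> \<R>) (\<T> \<union> \<R>) r \<Omega>"
proof -
  have ps: "partition_scheme D \<R>" and defS: "\<forall>S\<in>\<S>. qf_definable D \<R> S"
    using assms(1) unfolding backdoor_triple_def by auto
  have ar2: "\<And>R. R \<in> \<R> \<Longrightarrow> arity R = 2" using ps unfolding partition_scheme_def by auto
  have disj: "\<And>R1 R2 t. R1 \<in> \<R> \<Longrightarrow> R2 \<in> \<R> \<Longrightarrow> t \<in> tuples R1 \<Longrightarrow> t \<in> tuples R2 \<Longrightarrow> R1 = R2"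
    using ps unfolding partition_scheme_def by blast
  have cov: "\<And>x y. x \<in> D \<Longrightarrow> y \<in> D \<Longrightarrow> \<exists>R\<in>\<R>. [x, y] \<in> tuples R"
  proof -
    fix x y assume "x \<in> D" "y \<in> D"
    then have "[x, y] \<in> (\<Union>R\<in>\<R>. tuples R)" using ps unfolding partition_scheme_def by blast
    then show "\<exists>R\<in>\<R>. [x, y] \<in> tuples R" by blast
  qed
  have eqin: "equality_rel D \<in> \<R>" using ps unfolding partition_scheme_def by auto
  have key: "([f x, f y] \<in> tuples R) = ([g x, g y] \<in> tuples R)"
    if f: "f \<in> {..<r} \<rightarrow>\<^sub>E D" and g: "g \<in> Sol D r (rtype \<R> r f)" and x: "x < r" and y: "y < r"
      and R: "R \<in> \<R>" for f g x y R
  proof -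
    have gD: "g \<in> {..<r} \<rightarrow>\<^sub>E D" and gs: "\<forall>(R, vs)\<in>rtype \<R> r f. map g vs \<in> tuples R"
      using g unfolding Sol_def by auto
    have fwd: "[g x, g y] \<in> tuples R'" if "R' \<in> \<R>" "[f x, f y] \<in> tuples R'" for R'
    proof -
      have "(R', [x, y]) \<in> rtype \<R> r f" using that x y unfolding rtype_def by blast
      then show ?thesis using gs by fastforce
    qed
    show ?thesis
    proof
      assume "[f x, f y] \<in> tuples R" then show "[g x, g y] \<in> tuples R" using fwd R by blast
    next
      assume h: "[g x, g y] \<in> tuples R"
      have "f x \<in> D" "f y \<in> D" using f x y by auto
      then obtain R' where R': "R' \<in> \<R>" "[f x, f y] \<in> tuples R'" using cov by blast
      then have "[g x, g y] \<in> tuples R'" using fwd by blast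
      then have "R' = R" using disj R R' h by blast
      then show "[f x, f y] \<in> tuples R" using R' by simp
    qed
  qed
  define \<Omega> where "\<Omega> I = rtype \<R> r ` Sol D r I" for I
  have "branching_map D (\<S> \<union> \<R>) (\<T> \<union> \<R>) r \<Omega>"
    unfolding branching_map_def
  proof (intro ballI conjI)
    fix I assume I: "I \<in> instances_r (\<S> \<union> \<R>) r"
    show "\<Omega> I \<subseteq> instances_r (\<T> \<union> \<R>) r"
    proof
      fix J assume "J \<in> \<Omega> I"
      then obtain f where J: "J = rtype \<R> r f" unfolding \<Omega>_def by blast
      have "J \<subseteq> \<R> \<times> ((\<lambda>(i, j). [i, j]) ` ({..<r} \<times> {..<r}))"
        unfolding J rtype_def by auto
      moreover have "finite (\<R> \<times> ((\<lambda>(i, j). [i, j]) ` ({..<r} \<times> {..<r})))"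
        using assms(4) by auto
      ultimately have "finite J" by (rule finite_subset)
      then show "J \<in> instances_r (\<T> \<union> \<R>) r"
        unfolding instances_r_def J rtype_def using ar2 by auto
    qed
    show "Sol D r I = (\<Union>I'\<in>\<Omega> I. Sol D r I')"
    proof
      show "Sol D r I \<subseteq> (\<Union>I'\<in>\<Omega> I. Sol D r I')"
      proof
        fix f assume f: "f \<in> Sol D r I"
        have "f \<in> Sol D r (rtype \<R> r f)" using f unfolding Sol_def rtype_def by auto
        then show "f \<in> (\<Union>I'\<in>\<Omega> I. Sol D r I')" using f unfolding \<Omega>_def by blast
      qed
    next
      show "(\<Union>I'\<in>\<Omega> I. Sol D r I') \<subseteq> Sol D r I"
      proof
        fix g assume "g \<in> (\<Union>I'\<in>\<Omega> I. Sol D r I')"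
        then obtain f where f: "f \<in> Sol D r I" and g: "g \<in> Sol D r (rtype \<R> r f)"
          unfolding \<Omega>_def by blast
        have fD: "f \<in> {..<r} \<rightarrow>\<^sub>E D" and fs: "\<forall>(R, vs)\<in>I. map f vs \<in> tuples R"
          using f unfolding Sol_def by auto
        have gD: "g \<in> {..<r} \<rightarrow>\<^sub>E D" using g unfolding Sol_def by auto
        have "map g vs \<in> tuples R" if RI: "(R, vs) \<in> I" for R vs
        proof -
          have Rin: "R \<in> \<S> \<union> \<R>" and len: "length vs = arity R" and vr: "set vs \<subseteq> {..<r}"
            using I RI unfolding instances_r_def by auto
          have mf: "map f vs \<in> tuples R" using fs RI by auto
          show ?thesis
          proof (cases "R \<in> \<R>")
            case True
            then have "length vs = 2" using ar2 len by simp
            then obtain x y where vs: "vs = [x, y]"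
              by (metis (no_types, lifting) One_nat_def Suc_1 length_0_conv length_Suc_conv)
            have "x < r" "y < r" using vr vs by auto
            then show ?thesis using key[OF fD g _ _ True] mf vs by simp
          next
            case False
            then have "R \<in> \<S>" using Rin by simp
            then obtain \<phi> where phi: "qf_vars \<phi> \<subseteq> {..<arity R}" "qf_syms \<phi> \<subseteq> \<R>"
              "tuples R = {xs. length xs = arity R \<and> set xs \<subseteq> D \<and> qf_sat \<phi> xs}"
              using defS unfolding qf_definable_def by blast
            have sf: "set (map f vs) \<subseteq> D" using fD vr by auto
            have sg: "set (map g vs) \<subseteq> D" using gD vr by auto
            have "qf_sat \<phi> (map f vs) = qf_sat \<phi> (map g vs)"
            proof (rule qf_pres[OF eqin sf sg])
              show "length (map f vs) = length (map g vs)" by simp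
              show "qf_vars \<phi> \<subseteq> {..<length (map f vs)}" using phi len by simp
              show "qf_syms \<phi> \<subseteq> \<R>" using phi by simp
              fix i j R' assume "i < length (map f vs)" "j < length (map f vs)" "R' \<in> \<R>"
              moreover then have "vs!i < r" "vs!j < r" using vr nth_mem by (simp_all add: subset_iff)
              ultimately show "([map f vs ! i, map f vs ! j] \<in> tuples R') =
                    ([map g vs ! i, map g vs ! j] \<in> tuples R')"
                using key[OF fD g] by simp
            qed
            then show ?thesis using mf phi(3) sg by auto
          qed
        qed
        then show "g \<in> Sol D r I" using gD unfolding Sol_def by auto
      qed
    qed
  qed
  then show ?thesis by blast
qed

end
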